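(* Let $\pi>0$, $\bar d>0$, $0<\theta_1<\dots<\theta_K$, $0\le\beta_1<\dots<\beta_M\le1$, and let $A:[0,D]\to[0,\bar d]$ be differentiable with $A'(Q)<0$ on $[0,D]$. Enumerate the $KM$ types $(\beta_m,\theta_k)$ as $\Lambda_1,\dots,\Lambda_{KM}$ and write $L(Q,\beta,\theta)=\theta[\bar d-\beta A(Q)]-\pi(1-\beta)A(Q)$ and $\bar S(Q,\Pi,\Lambda)=L(Q,\Lambda)-\Pi$. Let $\Phi=\{\phi_i=(Q_i,\Pi_i)\}_{i=1}^{KM}$, $Q_i\in[0,D]$, $\Pi_i\in\mathbb{R}$, be a feasible contract, i.e. $\bar S(Q_i,\Pi_i,\Lambda_i)\ge0$ for all $i$ (individual rationality) and $\bar S(Q_i,\Pi_i,\Lambda_i)\ge\bar S(Q_j,\Pi_j,\Lambda_i)$ for all $i\neq j$ (incentive compatibility). Then for all $i,j$: $Q_i<Q_j$ if and only if $\Pi_i<\Pi_j$.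
   Context: Model: an operator offers a contract consisting of one item (data cap $Q_i$, monthly subscription fee $\Pi_i$) intended for each user type $\Lambda_i$. $\pi$ is the overage price, $\bar d$ the mean demand, $A(Q)$ the expected overage consumption under cap $Q$ (decreasing, convex). $L$ is the user's virtual payoff (payoff before the subscription fee), $\bar S$ his expected payoff. *)

theory Defs
  imports Complex_Main
begin

definition Lpay :: "real \<Rightarrow> real \<Rightarrow> (real \<Rightarrow> real) \<Rightarrow> real \<Rightarrow> real \<Rightarrow> real \<Rightarrow> real" where
  "Lpay pr dbar A Q b th = th * (dbar - b * A Q) - pr * (1 - b) * A Q"

definition Sbar :: "real \<Rightarrow> real \<Rightarrow> (real \<Rightarrow> real) \<Rightarrow> real \<Rightarrow> real \<Rightarrow> real \<Rightarrow> real \<Rightarrow> real" where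
  "Sbar pr dbar A Q P b th = Lpay pr dbar A Q b th - P"

end

theory Submission
  imports Defs
begin

lemma A_strict_dec:
  fixes A :: "real \<Rightarrow> real" and D x y :: real
  assumes A_deriv: "\<forall>q\<in>{0..D}. \<exists>A'. (A has_real_derivative A') (at q within {0..D}) \<and> A' < 0"
    and xy: "0 \<le> x" "x < y" "y \<le> D"
  shows "A y < A x"
proof -
  have cont: "continuous_on {0..D} A"
    unfolding continuous_on_eq_continuous_within
    using A_deriv DERIV_continuous by blast
  show ?thesis
  proof (rule DERIV_neg_imp_decreasing_open[OF xy(2)])
    fix z assume z: "x < z" "z < y"
    then have "0 < z" "z < D" using xy by auto
    then have eq: "at z within {0..D} = at z" by (rule at_within_Icc_at)
    from A_deriv \<open>0 < z\<close> \<open>z < D\<close> obtain d where "(A has_real_derivative d) (at z within {0..D})" "d < 0"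
      by force
    then show "\<exists>d. (A has_real_derivative d) (at z) \<and> d < 0" using eq by metis
  next
    show "continuous_on {x..y} A" proof (rule continuous_on_subset[OF cont])
      show "{x..y} \<subseteq> {0..D}" using xy by (intro subsetI) simp
    qed
  qed
qed

theorem lemma3:
  fixes pr dbar D :: real and K M :: nat
    and \<theta> \<beta> :: "nat \<Rightarrow> real" and A :: "real \<Rightarrow> real"
    and lam :: "nat \<Rightarrow> nat \<times> nat" and Q P :: "nat \<Rightarrow> real"
  assumes pr_pos: "pr > 0" and dbar_pos: "dbar > 0"
    and theta_pos: "\<theta> 1 > 0" and theta_mono: "strict_mono_on {1..K} \<theta>"
    and beta_nonneg: "\<beta> 1 \<ge> 0" and beta_le1: "\<beta> M \<le> 1" and beta_mono: "strict_mono_on {1..M} \<beta>"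
    and A_range: "\<forall>q\<in>{0..D}. A q \<in> {0..dbar}"
    and A_deriv: "\<forall>q\<in>{0..D}. \<exists>A'. (A has_real_derivative A') (at q within {0..D}) \<and> A' < 0"
    and enum: "bij_betw lam {1..K*M} ({1..M} \<times> {1..K})"
    and Q_range: "\<forall>i\<in>{1..K*M}. Q i \<in> {0..D}"
    and IR: "\<forall>i\<in>{1..K*M}. Sbar pr dbar A (Q i) (P i) (\<beta> (fst (lam i))) (\<theta> (snd (lam i))) \<ge> 0"
    and IC: "\<forall>i\<in>{1..K*M}. \<forall>j\<in>{1..K*M}. i \<noteq> j \<longrightarrow>
              Sbar pr dbar A (Q i) (P i) (\<beta> (fst (lam i))) (\<theta> (snd (lam i)))
              \<ge> Sbar pr dbar A (Q j) (P j) (\<beta> (fst (lam i))) (\<theta> (snd (lam i)))"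
  shows "\<forall>i\<in>{1..K*M}. \<forall>j\<in>{1..K*M}. (Q i < Q j \<longleftrightarrow> P i < P j)"
proof (intro ballI)
  fix i j assume i: "i \<in> {1..K*M}" and j: "j \<in> {1..K*M}"
  have cpos: "\<beta> (fst (lam k)) * \<theta> (snd (lam k)) + pr * (1 - \<beta> (fst (lam k))) > 0"
    if k: "k \<in> {1..K*M}" for k
  proof -
    have lk: "lam k \<in> {1..M} \<times> {1..K}" using bij_betw_apply[OF enum k] .
    then have m: "fst (lam k) \<in> {1..M}" and t: "snd (lam k) \<in> {1..K}" by auto
    have "M \<ge> 1" "K \<ge> 1" using m t by auto
    have b1: "\<beta> 1 \<le> \<beta> (fst (lam k))"
      using strict_mono_on_leD[OF beta_mono, of 1 "fst (lam k)"] m \<open>M \<ge> 1\<close> by auto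
    have b2: "\<beta> (fst (lam k)) \<le> \<beta> M"
      using strict_mono_on_leD[OF beta_mono, of "fst (lam k)" M] m \<open>M \<ge> 1\<close> by auto
    have t1: "\<theta> 1 \<le> \<theta> (snd (lam k))"
      using strict_mono_on_leD[OF theta_mono, of 1 "snd (lam k)"] t \<open>K \<ge> 1\<close> by auto
    define b where "b = \<beta> (fst (lam k))"
    define th where "th = \<theta> (snd (lam k))"
    have "0 \<le> b" "b \<le> 1" "th > 0" using b1 b2 t1 beta_nonneg beta_le1 theta_pos
      by (auto simp: b_def th_def)
    then have "b * th + pr * (1 - b) > 0"
    proof (cases "b = 0")
      case True then show ?thesis using pr_pos by simp
    next
      case False
      then have "b * th > 0" using \<open>0 \<le> b\<close> \<open>th > 0\<close> by simp
      moreover have "pr * (1 - b) \<ge> 0" using pr_pos \<open>b \<le> 1\<close> by simp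
      ultimately show ?thesis by linarith
    qed
    then show ?thesis by (simp add: b_def th_def)
  qed
  have mono: "A (Q b) < A (Q a)" if "a \<in> {1..K*M}" "b \<in> {1..K*M}" "Q a < Q b" for a b
    using A_strict_dec[OF A_deriv, of "Q a" "Q b"] Q_range that by auto
  have mono2: "A (Q b) \<le> A (Q a)" if "a \<in> {1..K*M}" "b \<in> {1..K*M}" "Q a \<le> Q b" for a b
    using mono[OF that(1,2)] that by (cases "Q a = Q b") auto
  show "Q i < Q j \<longleftrightarrow> P i < P j"
  proof (cases "i = j")
    case True then show ?thesis by simp
  next
    case False
    have ICi: "P j - P i \<ge> (\<beta> (fst (lam i)) * \<theta> (snd (lam i)) + pr * (1 - \<beta> (fst (lam i)))) * (A (Q i) - A (Q j))"
      using IC i j False by (auto simp: Sbar_def Lpay_def algebra_simps)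
    have ICj: "P i - P j \<ge> (\<beta> (fst (lam j)) * \<theta> (snd (lam j)) + pr * (1 - \<beta> (fst (lam j)))) * (A (Q j) - A (Q i))"
      using IC i j False by (auto simp: Sbar_def Lpay_def algebra_simps)
    show ?thesis
    proof
      assume "Q i < Q j"
      then have "A (Q j) < A (Q i)" using mono i j by blast
      then have "0 < (\<beta> (fst (lam i)) * \<theta> (snd (lam i)) + pr * (1 - \<beta> (fst (lam i)))) * (A (Q i) - A (Q j))"
        using cpos[OF i] by simp
      then show "P i < P j" using ICi by linarith
    next
      assume "P i < P j"
      show "Q i < Q j"
      proof (rule ccontr)
        assume "\<not> Q i < Q j"
        then have "A (Q i) \<le> A (Q j)" using mono2 i j by simp
        then have "0 \<le> (\<beta> (fst (lam j)) * \<theta> (snd (lam j)) + pr * (1 - \<beta> (fst (lam j)))) * (A (Q j) - A (Q i))"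
          using cpos[OF j] by simp
        then show False using ICj \<open>P i < P j\<close> by linarith
      qed
    qed
  qed
qed

end
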